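(* For every graph $G$ with $m\ge 2$ edges, \[\lambda_1^2+\lambda_2^2\le m+\big(3\,t(G)\big)^{2/3},\] and the inequality is strict if $t(G)>0$.
   Context: $\lambda_1\ge\lambda_2$ denote the two largest eigenvalues of the adjacency matrix of $G$, and $t(G)$ denotes the number of triangles in $G$. *)

theory Defs
  imports "Jordan_Normal_Form.Char_Poly" "HOL-Library.Multiset"
begin

definition simple_graph :: "nat \<Rightarrow> nat set set \<Rightarrow> bool" where
  "simple_graph n E \<longleftrightarrow> (\<forall>e\<in>E. e \<subseteq> {0..<n} \<and> card e = 2)"

definition adj_mat :: "nat \<Rightarrow> nat set set \<Rightarrow> real mat" where
  "adj_mat n E = mat n n (\<lambda>(i,j). if {i,j} \<in> E then 1 else 0)"

text \<open>Eigenvalues of the adjacency matrix, with multiplicity, in non-increasing order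
  (roots of the characteristic polynomial; all real since the matrix is symmetric).\<close>
definition adj_eigs :: "nat \<Rightarrow> nat set set \<Rightarrow> real list" where
  "adj_eigs n E = rev (sorted_list_of_multiset (proots (char_poly (adj_mat n E))))"

definition lambda1 :: "nat \<Rightarrow> nat set set \<Rightarrow> real" where
  "lambda1 n E = adj_eigs n E ! 0"

definition lambda2 :: "nat \<Rightarrow> nat set set \<Rightarrow> real" where
  "lambda2 n E = adj_eigs n E ! 1"

definition triangles :: "nat \<Rightarrow> nat set set \<Rightarrow> nat" where
  "triangles n E = card {T. T \<subseteq> {0..<n} \<and> card T = 3 \<and> (\<forall>x\<in>T. \<forall>y\<in>T. x \<noteq> y \<longrightarrow> {x,y} \<in> E)}"

end

theory Submission
  imports Defs "Jordan_Normal_Form.Schur_Decomposition" "HOL-Analysis.Convex"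
begin


definition hh :: "real \<Rightarrow> real" where "hh s = s powr (2/3)"

lemma hh_concave: "concave_on {0<..} hh"
  unfolding concave_on_def hh_def
proof (rule f''_ge0_imp_convex[where f'="\<lambda>x. -(2/3) * x powr (-1/3)" and f''="\<lambda>x. (2/9) * x powr (-4/3)"])
  show "convex {0::real<..}" by simp
  fix x :: real assume x: "x \<in> {0<..}"
  show "((\<lambda>x. - (x powr (2 / 3))) has_real_derivative - (2 / 3) * x powr (- 1 / 3)) (at x)"
    using x by (auto intro!: derivative_eq_intros simp: powr_diff field_simps)
  show "((\<lambda>x. - (2 / 3) * x powr (- 1 / 3)) has_real_derivative 2 / 9 * x powr (- 4 / 3)) (at x)"
    using x by (auto intro!: derivative_eq_intros simp: powr_diff field_simps)
  show "0 \<le> 2 / 9 * x powr (- 4 / 3)" by simp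
qed

lemma hh_nonneg: "hh s \<ge> 0" by (simp add: hh_def)
lemma hh_0[simp]: "hh 0 = 0" by (simp add: hh_def)
lemma hh_pos: "s > 0 \<Longrightarrow> hh s > 0" by (simp add: hh_def)
lemma hh_mono: "0 \<le> a \<Longrightarrow> a \<le> b \<Longrightarrow> hh a \<le> hh b"
  by (simp add: hh_def powr_mono2)
lemma hh_cube: "0 \<le> x \<Longrightarrow> hh (x^3) = x^2"
proof -
  assume x: "0 \<le> x"
  have "(x^3) powr (2/3) = (x powr 3) powr (2/3)" using x by (simp add: powr_realpow' )
  also have "\<dots> = x powr 2" by (simp add: powr_powr)
  also have "\<dots> = x^2" using x by (simp add: powr_realpow')
  finally show ?thesis by (simp add: hh_def)
qed

lemma hh_sub_strict: assumes "a > 0" "b > 0" shows "hh (a+b) < hh a + hh b"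
proof -
  have e: "\<And>s. s > 0 \<Longrightarrow> hh s = s * s powr (-1/3)"
    by (simp add: hh_def powr_add[symmetric] powr_mult_base)
  have "a powr (-1/3) > (a+b) powr (-1/3)" using assms by (intro powr_less_mono2_neg) auto
  moreover have "b powr (-1/3) > (a+b) powr (-1/3)" using assms by (intro powr_less_mono2_neg) auto
  ultimately have "a * a powr (-1/3) + b * b powr (-1/3) > a * (a+b) powr (-1/3) + b * (a+b) powr (-1/3)"
    using assms by (intro add_strict_mono mult_strict_left_mono) auto
  then show ?thesis using assms by (simp add: e distrib_right[symmetric])
qed

lemma hh_sub: assumes "a \<ge> 0" "b \<ge> 0" shows "hh (a+b) \<le> hh a + hh b"
  using hh_sub_strict[of a b] assms hh_nonneg[of a] hh_nonneg[of b]
  by (cases "a = 0"; cases "b = 0") auto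

lemma hh_half: "s \<ge> 0 \<Longrightarrow> hh (s/2) = hh s * (1/2) powr (2/3)"
  by (simp add: hh_def powr_divide)

lemma half_powr: "(1/2::real) powr (2/3) > 1/2"
proof -
  have "(1/2::real) powr (2/3) > (1/2) powr 1" by (intro powr_less_mono') auto
  then show ?thesis by simp
qed

lemma hh_double_strict: "s > 0 \<Longrightarrow> hh s < 2 * hh (s/2)"
  using half_powr hh_pos[of s] by (simp add: hh_half)

lemma hh_double: "s \<ge> 0 \<Longrightarrow> hh s \<le> 2 * hh (s/2)"
proof (cases "s = 0")
  case False
  assume "s \<ge> 0" with False hh_double_strict[of s] show ?thesis by simp
qed simp

lemma hh_mid: assumes "a \<ge> 0" "b \<ge> 0" shows "hh a + hh b \<le> 2 * hh ((a+b)/2)"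
proof (cases "a = 0 \<or> b = 0")
  case True then show ?thesis using assms hh_double by auto
next
  case False
  then have "a > 0" "b > 0" using assms by auto
  from concave_onD[OF hh_concave, of "1/2" a b] this
  have "hh ((1 - 1/2) *\<^sub>R a + (1/2) *\<^sub>R b) \<ge> (1 - 1/2) * hh a + (1/2) * hh b" by auto
  moreover have "(1 - 1/2) *\<^sub>R a + (1/2) *\<^sub>R b = (a+b)/2" by simp
  ultimately have "hh ((a+b)/2) \<ge> (1 - 1/2) * hh a + (1/2) * hh b" by metis
  moreover have "(1 - 1/2) * hh a + 1/2 * hh b = (hh a + hh b)/2" by simp
  ultimately have "(hh a + hh b)/2 \<le> hh ((a+b)/2)" by linarith
  then show ?thesis by (simp add: divide_le_eq mult.commute)
qed

lemma hh_major: assumes "0 \<le> c" "c \<le> a" "a \<le> d" "c \<le> b" "b \<le> d" "a + b = c + d"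
  shows "hh c + hh d \<le> hh a + hh b"
proof -
  consider "c = 0" | "c = d" | "c > 0" "c < d" using assms by linarith
  then show ?thesis
  proof cases
    case 1 then show ?thesis using hh_sub[of a b] assms by simp
  next
    case 2 then have "a = c" "b = c" using assms by auto
    then show ?thesis using 2 by simp
  next
    case 3
    define th where "th = (a - c) / (d - c)"
    have th0: "0 \<le> th" "th \<le> 1" using assms 3 by (auto simp: th_def field_simps)
    have tt: "th * (d - c) = a - c" using 3 by (simp add: th_def)
    have ea: "a = (1 - th) *\<^sub>R c + th *\<^sub>R d" using tt by (simp add: algebra_simps)
    have eb: "b = (1 - (1 - th)) *\<^sub>R c + (1 - th) *\<^sub>R d" using tt assms(6) by (simp add: algebra_simps)
    have "hh a \<ge> (1 - th) * hh c + th * hh d"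
      unfolding ea by (rule concave_onD[OF hh_concave]) (use th0 3 in auto)
    moreover have "hh b \<ge> (1 - (1 - th)) * hh c + (1 - th) * hh d"
      unfolding eb by (rule concave_onD[OF hh_concave]) (use th0 3 in auto)
    ultimately show ?thesis by (simp add: algebra_simps)
  qed
qed

definition Phi :: "real \<Rightarrow> real \<Rightarrow> real" where
  "Phi X s = (if s \<le> X then hh s else if s \<le> 2*X then hh X + hh (s - X) else 2 * hh X)"

lemma Phi_mono: assumes "X \<ge> 0" "0 \<le> s" "s \<le> s'" shows "Phi X s \<le> Phi X s'"
proof -
  have "hh (s - X) \<le> hh X" if "X \<le> s" "s \<le> 2*X" for s using that hh_mono[of "s - X" X] by auto
  then show ?thesis using assms hh_mono[of s s'] hh_mono[of s X] hh_mono[of "s - X" "s' - X"] hh_nonneg[of "s' - X"] hh_nonneg[of X]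
    unfolding Phi_def by (auto split: if_splits)
qed

lemma Phi_step: assumes "X \<ge> 0" "s \<ge> 0" "0 \<le> u" "u \<le> X"
  shows "Phi X (s + u) \<le> Phi X s + hh u"
proof -
  consider "s + u \<le> X" | "s \<le> X" "X < s + u" | "X < s" "s + u \<le> 2*X" | "X < s" "s \<le> 2*X" "2*X < s+u" | "2*X < s"
    using assms by linarith
  then show ?thesis
  proof cases
    case 1 then show ?thesis using hh_sub[of s u] assms by (simp add: Phi_def)
  next
    case 2
    have "hh (s + u - X) + hh X \<le> hh s + hh u"
      using 2 assms by (intro hh_major) auto
    then show ?thesis using 2 assms by (simp add: Phi_def)
  next
    case 3
    have "hh (s - X + u) \<le> hh (s - X) + hh u" using 3 assms by (intro hh_sub) auto
    then show ?thesis using 3 assms by (simp add: Phi_def algebra_simps)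
  next
    case 4
    have "hh (s - X + u) \<le> hh (s - X) + hh u" using 4 assms by (intro hh_sub) auto
    moreover have "hh X \<le> hh (s - X + u)" using 4 assms by (intro hh_mono) auto
    ultimately show ?thesis using 4 assms by (simp add: Phi_def algebra_simps)
  next
    case 5 then show ?thesis using assms hh_nonneg[of u] by (simp add: Phi_def)
  qed
qed

lemma Phi_list: assumes "X = x^3" "x \<ge> 0" "\<forall>q\<in>set qs. 0 \<le> q \<and> q \<le> x"
  shows "Phi X (sum_list (map (\<lambda>q. q^3) qs)) \<le> sum_list (map (\<lambda>q. q^2) qs)"
  using assms(3)
proof (induction qs)
  case Nil then show ?case using assms by (simp add: Phi_def)
next
  case (Cons q qs)
  have q: "0 \<le> q" "q \<le> x" using Cons.prems by auto
  have X: "X \<ge> 0" using assms by simp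
  have s: "sum_list (map (\<lambda>q. q^3) qs) \<ge> 0" using Cons.prems by (intro sum_list_nonneg) auto
  have "q^3 \<le> X" using q assms by (simp add: power_mono)
  then have "Phi X (sum_list (map (\<lambda>q. q^3) qs) + q^3) \<le> Phi X (sum_list (map (\<lambda>q. q^3) qs)) + hh (q^3)"
    using X s q by (intro Phi_step) auto
  then show ?case using Cons hh_cube[OF q(1)] by (simp add: add.commute)
qed

lemma Phi_pos: "X > 0 \<Longrightarrow> s > 0 \<Longrightarrow> Phi X s > 0"
  unfolding Phi_def using hh_pos[of s] hh_pos[of X] hh_nonneg[of "s - X"] by auto

lemma key_pos:
  assumes XY: "X \<ge> Y" "Y \<ge> 0" "X > 0" and U: "U \<ge> 0" and T: "T \<ge> 0" and UT: "U + T \<ge> X + Y"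
    and Q: "Qs \<ge> Phi X U"
  shows "hh X + hh Y \<le> Qs + 2 * hh (T/2) \<and> (T > 0 \<and> U > 0 \<longrightarrow> hh X + hh Y < Qs + 2 * hh (T/2))"
proof -
  consider "T \<ge> X + Y" | "Y \<le> T" "T < X + Y" | "T < Y" by linarith
  then show ?thesis
  proof cases
    case 1
    have "hh X + hh Y \<le> 2 * hh ((X+Y)/2)" using XY by (intro hh_mid) auto
    also have "\<dots> \<le> 2 * hh (T/2)" using 1 XY by (auto intro: hh_mono)
    finally have a: "hh X + hh Y \<le> 2 * hh (T/2)" .
    have "Phi X U \<ge> 0" using Phi_mono[of X 0 U] XY U by (simp add: Phi_def)
    moreover have "U > 0 \<Longrightarrow> Phi X U > 0" using Phi_pos XY by auto
    ultimately show ?thesis using a Q by fastforce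
  next
    case 2
    define s where "s = T - Y"
    have s: "0 \<le> s" "s < X" using 2 s_def by auto
    have "Phi X U \<ge> Phi X (X + Y - T)" using 2 UT XY by (intro Phi_mono) auto
    also have "X + Y - T = X - s" by (simp add: s_def)
    also have "Phi X (X - s) = hh (X - s)" using s by (simp add: Phi_def)
    finally have Qb: "Qs \<ge> hh (X - s)" using Q by simp
    have m: "hh Y + hh s \<le> 2 * hh (T/2)" using hh_mid[of Y s] s XY by (simp add: s_def)
    have sub: "hh X \<le> hh (X - s) + hh s" using hh_sub[of "X - s" s] s by simp
    have "hh X + hh Y \<le> Qs + 2 * hh (T/2)" using Qb m sub by linarith
    moreover have "T > 0 \<Longrightarrow> hh X + hh Y < Qs + 2 * hh (T/2)"
    proof (cases "s = 0")
      case True assume "T > 0"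
      then have "Y > 0" using True s_def by simp
      then have "hh Y < 2 * hh (T/2)" using hh_double_strict[of Y] True s_def by simp
      then show ?thesis using Qb True by simp
    next
      case False
      then have "hh X < hh (X - s) + hh s" using hh_sub_strict[of "X - s" s] s by simp
      then show ?thesis using Qb m by linarith
    qed
    ultimately show ?thesis by auto
  next
  case 3
  have "Phi X U \<ge> Phi X (X + (Y - T))" using 3 UT XY T by (intro Phi_mono) auto
  also have "Phi X (X + (Y - T)) = hh X + hh (Y - T)" using 3 XY T by (simp add: Phi_def)
  finally have Qb: "Qs \<ge> hh X + hh (Y - T)" using Q by simp
  have "hh Y \<le> hh (Y - T) + hh T" using hh_sub[of "Y - T" T] 3 T by simp
  moreover have "hh T \<le> 2 * hh (T/2)" using hh_double T by simp
  moreover have "T > 0 \<Longrightarrow> hh T < 2 * hh (T/2)" using hh_double_strict by simp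
  ultimately show ?thesis using Qb by fastforce
qed
qed

lemma sum_split_filter: "sum_list (map f xs) = sum_list (map f (filter P xs)) + sum_list (map f (filter (\<lambda>x. \<not> P x) xs))"
  for f :: "'a \<Rightarrow> real"
  by (induction xs) auto

lemma odd_bound:
  fixes L :: "real list"
  assumes le: "\<forall>l\<in>set L. l \<le> x" and x: "x \<ge> 0"
    and odd: "\<forall>p. odd p \<longrightarrow> sum_list (map (\<lambda>l. l^p) L) \<ge> 0" and l0: "l0 \<in> set L"
  shows "- x \<le> l0"
proof (rule ccontr)
  assume "\<not> - x \<le> l0"
  define M where "M = - l0"
  have M: "M > x" "M > 0" using \<open>\<not> - x \<le> l0\<close> x by (auto simp: M_def)
  define N where "N = length L"
  define r where "r = x / M"
  have r: "0 \<le> r" "r < 1" using M x by (auto simp: r_def)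
  obtain k where k: "r ^ k < 1 / (real N + 1)"
    using real_arch_pow_inv[of "1 / (real N + 1)" r] r by auto
  define p where "p = 2 * k + 1"
  have podd: "odd p" by (simp add: p_def)
  have "r ^ p \<le> r ^ k" using r by (intro power_decreasing) (auto simp: p_def)
  have xp: "x ^ p = r ^ p * M ^ p" using M by (simp add: r_def power_divide)
  have "sum_list (map (\<lambda>l. l^p) L) = l0 ^ p + sum_list (map (\<lambda>l. l^p) (remove1 l0 L))"
    using l0 by (rule sum_list_map_remove1)
  also have "sum_list (map (\<lambda>l. l^p) (remove1 l0 L)) \<le> sum_list (map (\<lambda>l. x^p) (remove1 l0 L))"
  proof (rule sum_list_mono)
    fix l assume "l \<in> set (remove1 l0 L)"
    then have "l \<in> set L" using set_remove1_subset by fast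
    then show "l ^ p \<le> x ^ p" using le podd power_mono_odd by blast
  qed
  also have "\<dots> = real (length (remove1 l0 L)) * x^p" by (simp add: sum_list_triv)
  also have "\<dots> \<le> real N * x^p"
    using podd x by (intro mult_right_mono) (auto simp: N_def length_remove1 zero_le_power)
  also have "l0 ^ p = - (M ^ p)" using podd by (simp add: M_def)
  finally have "0 \<le> - (M ^ p) + real N * x ^ p" using odd podd by force
  moreover have "real N * x ^ p < M ^ p"
  proof -
    have "real N * x ^ p = real N * r ^ p * M ^ p" using xp by simp
    also have "\<dots> \<le> real N * r ^ k * M ^ p" using \<open>r ^ p \<le> r ^ k\<close> M
      by (intro mult_right_mono mult_left_mono) auto
    also have "\<dots> \<le> real N * (1 / (real N + 1)) * M ^ p" using k M
      by (intro mult_right_mono mult_left_mono) auto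
    also have "\<dots> < M ^ p" using M by (simp add: field_simps)
    finally show ?thesis .
  qed
  ultimately show False by linarith
qed



lemma neg_case_poly:
  fixes x z D T :: real
  assumes z: "0 < z" "2 * z \<le> x" and D: "0 < D" "D \<le> x^2 - x*z + 2*z^2"
    and T: "T \<ge> z * (x^2 - 2*x*z + 2*z^2) + (x - z) * D"
  shows "100 * (D * x) \<le> 141 * T"
proof -
  have "x^2 - 2*x*z + 2*z^2 = (x-z)^2 + z^2" by (simp add: power2_eq_square algebra_simps)
  moreover have "(x-z)^2 + z^2 \<ge> 0" by simp
  ultimately have "x^2 - 2*x*z + 2*z^2 \<ge> 0" by linarith
  then have nn: "z * (x^2 - 2*x*z + 2*z^2) \<ge> 0" using z by simp
  consider "141 * z - 41 * x \<le> 0" | "141 * z - 41 * x > 0" by linarith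
  then show ?thesis
  proof cases
    case 1
    have "D * (100 * x - 141 * (x - z)) \<le> 0" using 1 D by (intro mult_nonneg_nonpos) auto
    then show ?thesis using T nn by (simp add: algebra_simps)
  next
    case 2
    have "D * (141 * z - 41 * x) \<le> (x^2 - x*z + 2*z^2) * (141 * z - 41 * x)"
      using 2 D by (intro mult_right_mono) auto
    moreover have "(x^2 - x*z + 2*z^2) * (141 * z - 41 * x) \<le> 141 * (z * (x^2 - 2*x*z + 2*z^2))"
    proof -
      obtain d where d: "x = 2*z + d" "d \<ge> 0" using z by (metis add.commute diff_add_cancel diff_ge_0_iff_ge)
      have "0 \<le> x * (23*z^2 + 123*z*d + 41*d^2)" using d z by (intro mult_nonneg_nonneg) auto
      then show ?thesis unfolding d(1) by (simp add: algebra_simps power2_eq_square power3_eq_cube)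
    qed
    ultimately show ?thesis using T by (simp add: algebra_simps)
  qed
qed

lemma cube_to_powr:
  fixes D T :: real
  assumes "0 < D" "0 \<le> T" "D^3 < 2 * T^2"
  shows "D < 2 * hh (T/2)"
proof -
  have a: "(D/2)^3 < (T/2)^2" using assms by (simp add: power_divide)
  have "D^3 > 0" using assms by simp
  then have "T^2 > 0" using assms by linarith
  then have "T \<noteq> 0" by auto
  then have Tp: "T > 0" using assms by linarith
  have p1: "(D/2) powr 3 = (D/2)^3" using powr_realpow[of "D/2" 3] assms by simp
  have p2: "(T/2) powr 2 = (T/2)^2" using powr_realpow[of "T/2" 2] Tp by simp
  have q1: "((D/2) powr 3) powr (1/3) = D/2" using assms
    by (subst powr_powr) simp
  have q2: "((T/2) powr 2) powr (1/3) = (T/2) powr (2/3)"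
    by (subst powr_powr) simp
  have "((D/2) powr 3) powr (1/3) < ((T/2) powr 2) powr (1/3)" unfolding p1 p2 using a assms
    by (intro powr_less_mono2) auto
  then show ?thesis unfolding q1 q2 by (simp add: hh_def)
qed

lemma sum_list_minus1: "sum_list (map uminus xs) = - sum_list (xs :: real list)"
  by (induction xs) auto
lemma sum_list_minus2: "sum_list (map (\<lambda>x. - f x) ys) = - sum_list (map f ys :: real list)"
  by (induction ys) auto
lemmas sum_list_minus = sum_list_minus1 sum_list_minus2

lemma main_real:
  fixes L :: "real list" and m t :: real
  assumes srt: "sorted_wrt (\<ge>) L" and len: "length L \<ge> 3"
    and s1: "sum_list L = 0" and s2: "sum_list (map (\<lambda>l. l^2) L) = 2*m" and mpos: "m > 0"
    and s3: "sum_list (map (\<lambda>l. l^3) L) = 6*t" and t: "t \<ge> 0"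
    and odd: "\<forall>p. odd p \<longrightarrow> sum_list (map (\<lambda>l. l^p) L) \<ge> 0"
  shows "L!0^2 + L!1^2 \<le> m + (3*t) powr (2/3) \<and> (t > 0 \<longrightarrow> L!0^2 + L!1^2 < m + (3*t) powr (2/3))"
proof -
  obtain x y R where L: "L = x # y # R" and Rne: "R \<noteq> []" using len
    by (cases L; cases "tl L"; cases "tl (tl L)") auto
  have Gdef: "2 * hh (6*t/2) = 2 * (3*t) powr (2/3)" by (simp add: hh_def)
  have xge: "\<forall>l\<in>set L. l \<le> x" using srt by (auto simp: L)
  have yge: "\<forall>l\<in>set R. l \<le> y" using srt by (auto simp: L)
  have xy: "y \<le> x" using srt by (simp add: L)
  have xpos: "x > 0"
  proof (rule ccontr)
    assume "\<not> x > 0"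
    then have nn: "\<forall>l\<in>set (map uminus L). 0 \<le> l" using xge by auto
    moreover have "sum_list (map uminus L) = 0" using s1 by (simp add: sum_list_minus)
    ultimately have "\<forall>l\<in>set (map uminus L). l = 0" using sum_list_nonneg_eq_0_iff[of "map uminus L"] by blast
    then have z: "\<forall>l\<in>set L. l = 0" by simp
    have "sum_list (map (\<lambda>l. l^2) L) = 0" using z by (induction L) auto
    then show False using s2 mpos by simp
  qed
  have lowb: "\<forall>l\<in>set L. - x \<le> l" using odd_bound[OF xge _ odd] xpos by auto
  have G0: "0 \<le> 2 * hh (6*t/2)" using hh_nonneg by simp
  have Gpos: "t > 0 \<Longrightarrow> 0 < 2 * hh (6*t/2)" using hh_pos[of "6*t/2"] by simp
  have goal_red: "?thesis" if H: "2*(x^2 + y^2) - 2*m \<le> 2 * hh (6*t/2)"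
    "t > 0 \<Longrightarrow> 2*(x^2 + y^2) - 2*m < 2 * hh (6*t/2)"
    using H Gdef by (auto simp: L)
  show ?thesis
  proof (cases "y \<ge> 0")
    case True
    define negs where "negs = filter (\<lambda>l. l < 0) R"
    define poss where "poss = filter (\<lambda>l. \<not> l < 0) R"
    define qs where "qs = map uminus negs"
    define P where "P = sum_list (map (\<lambda>l. l^2) poss)"
    define P3 where "P3 = sum_list (map (\<lambda>l. l^3) poss)"
    define Q where "Q = sum_list (map (\<lambda>l. l^2) qs)"
    define U where "U = sum_list (map (\<lambda>l. l^3) qs)"
    have P: "P \<ge> 0" unfolding P_def by (intro sum_list_nonneg) auto
    have P3: "P3 \<ge> 0" unfolding P3_def poss_def by (intro sum_list_nonneg) auto
    have U: "U \<ge> 0" unfolding U_def qs_def negs_def by (intro sum_list_nonneg) auto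
    have eQ: "sum_list (map (\<lambda>l. l^2) negs) = Q" by (simp add: Q_def qs_def o_def)
    have eU: "sum_list (map (\<lambda>l. l^3) negs) = - U" by (simp add: U_def qs_def o_def sum_list_minus)
    have e2: "x^2 + y^2 + P + Q = 2*m"
      using s2 sum_split_filter[of "\<lambda>l. l^2" R "\<lambda>l. l < 0"] eQ by (simp add: L P_def negs_def poss_def)
    have e3: "x^3 + y^3 + P3 - U = 6*t"
      using s3 sum_split_filter[of "\<lambda>l. l^3" R "\<lambda>l. l < 0"] eU by (simp add: L P3_def negs_def poss_def)
    have qsb: "\<forall>q\<in>set qs. 0 \<le> q \<and> q \<le> x" using lowb by (auto simp: qs_def negs_def L)
    have PhiQ: "Phi (x^3) U \<le> Q" unfolding U_def Q_def using Phi_list[OF refl _ qsb] xpos by simp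
    have k: "hh (x^3) + hh (y^3) \<le> Q + 2 * hh (6*t/2) \<and>
         (6*t > 0 \<and> U > 0 \<longrightarrow> hh (x^3) + hh (y^3) < Q + 2 * hh (6*t/2))"
      using True xy xpos U t e3 P3 PhiQ
      by (intro key_pos) (auto intro: power_mono)
    have hx: "hh (x^3) = x^2" "hh (y^3) = y^2" using True xpos by (auto simp: hh_cube)
    have Upos: "U > 0"
    proof -
      have "negs \<noteq> []"
      proof
        assume "negs = []"
        then have "\<forall>l\<in>set R. 0 \<le> l" by (auto simp: negs_def filter_empty_conv)
        then have "sum_list R \<ge> 0" by (intro sum_list_nonneg) auto
        then show False using s1 xpos True by (simp add: L)
      qed
      then obtain q where q: "q \<in> set qs" by (cases negs) (auto simp: qs_def)
      then have "q > 0" by (auto simp: qs_def negs_def)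
      have "U = q^3 + sum_list (map (\<lambda>l. l^3) (remove1 q qs))"
        unfolding U_def using q by (rule sum_list_map_remove1)
      moreover have "sum_list (map (\<lambda>l. l^3) (remove1 q qs)) \<ge> 0"
        using qsb set_remove1_subset[of q qs] by (intro sum_list_nonneg) auto
      ultimately show ?thesis using \<open>q > 0\<close> by (smt (verit) zero_less_power)
    qed
    show ?thesis
      by (rule goal_red) (use k hx e2 P Upos in auto)
  next
    case False
    define z where "z = - y"
    define ws where "ws = map uminus R"
    define S where "S = sum_list ws"
    define Q where "Q = z^2 + sum_list (map (\<lambda>l. l^2) ws)"
    define U where "U = z^3 + sum_list (map (\<lambda>l. l^3) ws)"
    have z: "z > 0" using False by (simp add: z_def)
    have wsb: "\<forall>e\<in>set ws. z \<le> e" using yge by (auto simp: ws_def z_def)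
    have wsnn: "\<forall>e\<in>set ws. 0 \<le> e" using wsb z by auto
    have Sx: "z + S = x" using s1 by (simp add: L z_def S_def ws_def sum_list_minus)
    have eQ: "x^2 + Q = 2*m" using s2 by (simp add: L Q_def z_def ws_def o_def)
    have eU: "x^3 - U = 6*t" using s3 by (simp add: L U_def z_def ws_def o_def sum_list_minus)
    have wsS: "\<forall>e\<in>set ws. e \<le> S" using wsnn by (auto simp: S_def intro: member_le_sum_list)
    have zS: "z \<le> S" using wsb wsS Rne by (cases R) (auto simp: ws_def)
    have Qxz: "Q \<ge> x * z"
    proof -
      have "sum_list (map (\<lambda>l. l^2) ws) \<ge> sum_list (map (\<lambda>l. z * l) ws)"
        using wsb z by (intro sum_list_mono) (auto simp: power2_eq_square intro: mult_right_mono)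
      also have "sum_list (map (\<lambda>l. z * l) ws) = z * S" by (simp add: S_def sum_list_const_mult)
      finally have "z * S \<le> sum_list (map (\<lambda>l. l^2) ws)" .
      moreover have "x * z = z * S + z^2" unfolding Sx[symmetric] by (simp add: algebra_simps power2_eq_square)
      ultimately show ?thesis by (simp add: Q_def)
    qed
    have USQ: "U \<le> S * Q"
    proof -
      have "sum_list (map (\<lambda>l. l^3) ws) \<le> sum_list (map (\<lambda>l. S * l^2) ws)"
      proof (rule sum_list_mono)
        fix l assume "l \<in> set ws"
        then have "l \<le> S" "0 \<le> l" using wsS wsnn by auto
        then have "l * l^2 \<le> S * l^2" by (intro mult_right_mono) auto
        then show "l^3 \<le> S * l^2" by (simp add: power3_eq_cube power2_eq_square)
      qed
      also have "\<dots> = S * sum_list (map (\<lambda>l. l^2) ws)" by (simp add: sum_list_const_mult)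
      moreover have "z^3 \<le> S * z^2" using zS z by (simp add: power3_eq_cube power2_eq_square)
      ultimately show ?thesis by (simp add: U_def Q_def algebra_simps)
    qed
    define D where "D = x^2 + 2*z^2 - Q"
    have Deq: "2*(x^2 + y^2) - 2*m = D" using eQ by (simp add: D_def z_def)
    show ?thesis
    proof (rule goal_red)
      have "D < 2 * hh (6*t/2)" if Dp: "D > 0"
      proof -
        have z2: "2 * z \<le> x" using zS Sx by simp
        have Dle: "D \<le> x^2 - x*z + 2*z^2" using Qxz by (simp add: D_def algebra_simps)
        have Dle2: "D \<le> x^2"
        proof -
          have "2*z^2 \<le> x*z" using z2 z by (simp add: power2_eq_square)
          then show ?thesis using Dle by simp
        qed
        have T: "6*t \<ge> z * (x^2 - 2*x*z + 2*z^2) + (x - z) * D"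
        proof -
          have "6*t \<ge> x^3 - S * Q" using eU USQ by simp
          moreover have "S = x - z" using Sx by simp
          moreover have "Q = x^2 + 2*z^2 - D" by (simp add: D_def)
          ultimately show ?thesis by (simp add: algebra_simps power2_eq_square power3_eq_cube)
        qed
        have b: "100 * (D * x) \<le> 141 * (6*t)" using neg_case_poly[OF z z2 Dp Dle T] .
        have "D * x > 0" using Dp xpos by simp
        then have tp: "6*t > 0" using b by linarith
        have "D^3 \<le> D^2 * x^2" using Dle2 Dp by (simp add: power2_eq_square power3_eq_cube)
        also have "\<dots> = (D*x)^2" by (simp add: power_mult_distrib)
        also have "\<dots> \<le> (141/100 * (6*t))^2" using b Dp xpos
          by (intro power_mono) auto
        also have "\<dots> < 2 * (6*t)^2" using tp by (simp add: power_mult_distrib power_divide)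
        finally show ?thesis using Dp t by (intro cube_to_powr) auto
      qed
      then show "2*(x^2 + y^2) - 2*m \<le> 2 * hh (6*t/2)" using G0 Deq by fastforce
      show "2*(x^2 + y^2) - 2*m < 2 * hh (6*t/2)" if "t > 0"
        using \<open>0 < D \<Longrightarrow> D < 2 * hh (6*t/2)\<close> Gpos[OF that] Deq by fastforce
    qed
  qed
qed




definition mtr :: "'a::comm_ring_1 mat \<Rightarrow> 'a" where
  "mtr M = (\<Sum>i\<in>{0..<dim_row M}. M $$ (i,i))"

lemma mult_entry: assumes "A \<in> carrier_mat n m" "B \<in> carrier_mat m k" "i < n" "j < k"
  shows "(A * B) $$ (i,j) = (\<Sum>l\<in>{0..<m}. A $$ (i,l) * B $$ (l,j))"
  using assms by (simp add: scalar_prod_def)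

lemma mtr_comm: fixes A B :: "'a::comm_ring_1 mat"
  assumes A: "A \<in> carrier_mat n m" and B: "B \<in> carrier_mat m n"
  shows "mtr (A * B) = mtr (B * A)"
proof -
  have "mtr (A * B) = (\<Sum>i\<in>{0..<n}. (A * B) $$ (i,i))" unfolding mtr_def using A by simp
  also have "\<dots> = (\<Sum>i\<in>{0..<n}. \<Sum>l\<in>{0..<m}. A $$ (i,l) * B $$ (l,i))"
    by (rule sum.cong[OF refl], rule mult_entry[OF A B]) auto
  also have "\<dots> = (\<Sum>l\<in>{0..<m}. \<Sum>i\<in>{0..<n}. B $$ (l,i) * A $$ (i,l))"
    by (subst sum.swap) (simp add: mult.commute)
  also have "\<dots> = (\<Sum>i\<in>{0..<m}. (B * A) $$ (i,i))"
    by (rule sum.cong[OF refl], rule mult_entry[OF B A, symmetric]) auto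
  also have "\<dots> = mtr (B * A)" unfolding mtr_def using B by simp
  finally show ?thesis .
qed

lemma mtr_similar_pow: assumes "similar_mat_wit A B P Q" "A \<in> carrier_mat n n"
  shows "mtr (A ^\<^sub>m k) = mtr (B ^\<^sub>m k)"
proof -
  from similar_mat_witD2[OF assms(2) assms(1)] have
    PQ: "Q * P = 1\<^sub>m n" and B: "B \<in> carrier_mat n n" and P: "P \<in> carrier_mat n n" and Q: "Q \<in> carrier_mat n n"
    by auto
  have Bk: "B ^\<^sub>m k \<in> carrier_mat n n" using B by simp
  have "A ^\<^sub>m k = P * B ^\<^sub>m k * Q" using similar_mat_wit_pow_id[OF assms(1)] .
  then have "mtr (A ^\<^sub>m k) = mtr (P * (B ^\<^sub>m k * Q))" using P Bk Q by (simp add: assoc_mult_mat)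
  also have "\<dots> = mtr ((B ^\<^sub>m k * Q) * P)" using P Bk Q by (intro mtr_comm[of _ n n]) auto
  also have "\<dots> = mtr (B ^\<^sub>m k * (Q * P))" using P Bk Q by (simp add: assoc_mult_mat)
  also have "\<dots> = mtr (B ^\<^sub>m k)" using PQ right_mult_one_mat[OF Bk] by simp
  finally show ?thesis .
qed

lemma upper_tri_pow: fixes B :: "'a::comm_ring_1 mat"
  assumes B: "B \<in> carrier_mat n n" and ut: "upper_triangular B"
  shows "upper_triangular (B ^\<^sub>m k) \<and> (\<forall>i<n. (B ^\<^sub>m k) $$ (i,i) = (B $$ (i,i)) ^ k)"
proof (induction k)
  case 0 then show ?case using B by auto
next
  case (Suc k)
  let ?C = "B ^\<^sub>m k"
  have C: "?C \<in> carrier_mat n n" using B by simp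
  have utC: "upper_triangular ?C" and dC: "\<forall>i<n. ?C $$ (i,i) = (B $$ (i,i)) ^ k" using Suc by auto
  have z1: "?C $$ (i,l) = 0" if "l < i" "i < n" for i l using utC that C by auto
  have z2: "B $$ (l,j) = 0" if "j < l" "l < n" for l j using ut that B by auto
  have ut': "upper_triangular (?C * B)"
  proof (rule upper_triangularI)
    fix i j assume ij: "j < i" "i < dim_row (?C * B)"
    then have i: "i < n" using C B by simp
    have "(?C * B) $$ (i,j) = (\<Sum>l\<in>{0..<n}. ?C $$ (i,l) * B $$ (l,j))"
      using mult_entry[OF C B] ij i by simp
    also have "\<dots> = 0"
    proof (rule sum.neutral, rule ballI)
      fix l assume "l \<in> {0..<n}"
      then show "?C $$ (i,l) * B $$ (l,j) = 0" using z1[of l i] z2[of j l] ij i by (cases "l < i") auto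
    qed
    finally show "(?C * B) $$ (i,j) = 0" .
  qed
  have d': "(?C * B) $$ (i,i) = (B $$ (i,i)) ^ Suc k" if i: "i < n" for i
  proof -
    have "(?C * B) $$ (i,i) = (\<Sum>l\<in>{0..<n}. ?C $$ (i,l) * B $$ (l,i))"
      using mult_entry[OF C B] i by simp
    also have "\<dots> = (\<Sum>l\<in>{i}. ?C $$ (i,l) * B $$ (l,i))"
    proof (rule sum.mono_neutral_right)
      show "\<forall>l\<in>{0..<n} - {i}. ?C $$ (i,l) * B $$ (l,i) = 0"
      proof
        fix l assume "l \<in> {0..<n} - {i}"
        then show "?C $$ (i,l) * B $$ (l,i) = 0" using z1[of l i] z2[of i l] i by (cases "l < i") auto
      qed
    qed (use i in auto)
    also have "\<dots> = ?C $$ (i,i) * B $$ (i,i)" by simp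
    finally show ?thesis using dC i by (simp add: mult.commute)
  qed
  show ?case using ut' d' by simp
qed

lemma mtr_upper_tri_pow: fixes B :: "'a::comm_ring_1 mat"
  assumes B: "B \<in> carrier_mat n n" and ut: "upper_triangular B"
  shows "mtr (B ^\<^sub>m k) = sum_list (map (\<lambda>a. a ^ k) (diag_mat B))"
proof -
  have "mtr (B ^\<^sub>m k) = (\<Sum>i\<in>{0..<n}. (B $$ (i,i)) ^ k)"
    unfolding mtr_def using upper_tri_pow[OF B ut, of k] B by simp
  also have "\<dots> = sum_list (map (\<lambda>i. (B $$ (i,i)) ^ k) [0..<n])"
    by (simp add: sum_list_distinct_conv_sum_set)
  finally show ?thesis using B by (simp add: diag_mat_def o_def)
qed



lemma herm_real:
  fixes A :: "real mat"
  assumes A: "A \<in> carrier_mat n n" and sym: "\<And>i j. i < n \<Longrightarrow> j < n \<Longrightarrow> A $$ (i,j) = A $$ (j,i)"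
    and ev: "eigenvalue (map_mat complex_of_real A) a"
  shows "Im a = 0"
proof -
  let ?Ac = "map_mat complex_of_real A"
  obtain v where v: "v \<in> carrier_vec n" "v \<noteq> 0\<^sub>v n" "?Ac *\<^sub>v v = a \<cdot>\<^sub>v v"
    using ev A unfolding eigenvalue_def eigenvector_def by auto
  have Avi: "(?Ac *\<^sub>v v) $ i = (\<Sum>j\<in>{0..<n}. complex_of_real (A $$ (i,j)) * v $ j)" if "i < n" for i
    using that A v(1) by (simp add: scalar_prod_def)
  define s where "s = (\<Sum>i\<in>{0..<n}. cnj (v $ i) * (\<Sum>j\<in>{0..<n}. complex_of_real (A $$ (i,j)) * v $ j))"
  define N where "N = (\<Sum>i\<in>{0..<n}. (cmod (v $ i))^2)"
  have s1: "s = a * complex_of_real N"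
  proof -
    have "s = (\<Sum>i\<in>{0..<n}. cnj (v $ i) * (a * v $ i))"
      unfolding s_def
    proof (rule sum.cong[OF refl])
      fix i assume i: "i \<in> {0..<n}"
      have "(?Ac *\<^sub>v v) $ i = a * v $ i" using v i by simp
      then show "cnj (v $ i) * (\<Sum>j\<in>{0..<n}. complex_of_real (A $$ (i,j)) * v $ j) = cnj (v $ i) * (a * v $ i)"
        using Avi i by simp
    qed
    also have "\<dots> = a * (\<Sum>i\<in>{0..<n}. cnj (v $ i) * v $ i)"
      by (simp add: sum_distrib_left algebra_simps)
    also have "(\<Sum>i\<in>{0..<n}. cnj (v $ i) * v $ i) = complex_of_real N"
      unfolding N_def of_real_sum
      by (rule sum.cong[OF refl]) (metis complex_norm_square mult.commute of_real_power)
    finally show ?thesis .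
  qed
  have s2: "cnj s = s"
  proof -
    have "cnj s = (\<Sum>i\<in>{0..<n}. v $ i * (\<Sum>j\<in>{0..<n}. complex_of_real (A $$ (i,j)) * cnj (v $ j)))"
      unfolding s_def by (simp add: cnj_sum)
    also have "\<dots> = (\<Sum>i\<in>{0..<n}. \<Sum>j\<in>{0..<n}. v $ i * complex_of_real (A $$ (i,j)) * cnj (v $ j))"
      by (simp add: sum_distrib_left mult.assoc)
    also have "\<dots> = (\<Sum>j\<in>{0..<n}. \<Sum>i\<in>{0..<n}. v $ i * complex_of_real (A $$ (i,j)) * cnj (v $ j))"
      by (rule sum.swap)
    also have "\<dots> = (\<Sum>j\<in>{0..<n}. cnj (v $ j) * (\<Sum>i\<in>{0..<n}. complex_of_real (A $$ (j,i)) * v $ i))"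
      by (rule sum.cong[OF refl]) (auto simp: sum_distrib_left sym algebra_simps intro!: sum.cong)
    finally show ?thesis unfolding s_def by simp
  qed
  have Npos: "N > 0"
  proof -
    obtain i where i: "i < n" "v $ i \<noteq> 0" using v(1,2) by (metis carrier_vecD eq_vecI index_zero_vec)
    have "(cmod (v $ i))^2 \<le> N" unfolding N_def using i
      by (intro member_le_sum) auto
    moreover have "(cmod (v $ i))^2 > 0" using i by simp
    ultimately show ?thesis by linarith
  qed
  have "Im (cnj s) = Im s" using s2 by simp
  then have "Im s = 0" by simp
  then have "Im a * N = 0" using s1 by simp
  then show ?thesis using Npos by simp
qed



lemma spectral_sums:
  fixes A :: "real mat"
  assumes A: "A \<in> carrier_mat n n" and sym: "\<And>i j. i < n \<Longrightarrow> j < n \<Longrightarrow> A $$ (i,j) = A $$ (j,i)"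
  shows "\<exists>rs. char_poly A = (\<Prod>r\<leftarrow>rs. [:-r, 1:]) \<and> length rs = n \<and>
           (\<forall>k. sum_list (map (\<lambda>r. r^k) rs) = mtr (A ^\<^sub>m k))"
proof -
  interpret mp: map_poly_inj_comm_ring_hom "complex_of_real" ..
  define Ac where "Ac = map_mat complex_of_real A"
  have Ac: "Ac \<in> carrier_mat n n" using A by (simp add: Ac_def)
  have cp: "char_poly Ac = map_poly complex_of_real (char_poly A)"
    unfolding Ac_def by (rule of_real_hom.char_poly_hom[OF A])
  obtain as where as: "char_poly Ac = (\<Prod>a\<leftarrow>as. [:-a, 1:])" "length as = n"
    using char_poly_factorized[OF Ac] by blast
  have real: "Im a = 0" if a: "a \<in> set as" for a
  proof -
    have "poly (char_poly Ac) a = 0" unfolding as(1) poly_prod_list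
      using a by (auto simp: prod_list_zero_iff)
    then have "eigenvalue Ac a" using eigenvalue_root_char_poly[OF Ac] by simp
    then show ?thesis using herm_real[OF A sym] by (simp add: Ac_def)
  qed
  define rs where "rs = map Re as"
  have asrs: "as = map complex_of_real rs"
    unfolding rs_def map_map o_def using real by (intro nth_equalityI) (auto simp: complex_eq_iff)
  have "map_poly complex_of_real (\<Prod>r\<leftarrow>rs. [:-r, 1:]) = (\<Prod>r\<leftarrow>rs. map_poly complex_of_real [:-r, 1:])"
    by (simp add: mp.hom_prod_list o_def)
  also have "\<dots> = (\<Prod>a\<leftarrow>as. [:-a, 1:])" unfolding asrs by (simp add: o_def)
  finally have "map_poly complex_of_real (\<Prod>r\<leftarrow>rs. [:-r, 1:]) = map_poly complex_of_real (char_poly A)"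
    using as(1) cp by simp
  then have cpA: "char_poly A = (\<Prod>r\<leftarrow>rs. [:-r, 1:])" by simp
  obtain B P Q where BPQ: "schur_decomposition Ac as = (B,P,Q)" by (cases "schur_decomposition Ac as") auto
  from schur_decomposition[OF Ac as(1) BPQ]
  have sim: "similar_mat_wit Ac B P Q" and ut: "upper_triangular B" and dg: "diag_mat B = as" by auto
  have B: "B \<in> carrier_mat n n" using similar_mat_witD2[OF Ac sim] by auto
  have "sum_list (map (\<lambda>r. r^k) rs) = mtr (A ^\<^sub>m k)" for k
  proof -
    have "complex_of_real (sum_list (map (\<lambda>r. r^k) rs)) = sum_list (map (\<lambda>a. a^k) as)"
      unfolding asrs by (simp add: of_real_hom.hom_sum_list o_def)
    also have "\<dots> = mtr (B ^\<^sub>m k)" using mtr_upper_tri_pow[OF B ut] dg by simp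
    also have "\<dots> = mtr (Ac ^\<^sub>m k)" using mtr_similar_pow[OF sim Ac] by simp
    also have "Ac ^\<^sub>m k = map_mat complex_of_real (A ^\<^sub>m k)"
      unfolding Ac_def by (simp add: of_real_hom.mat_hom_pow[OF A])
    also have "mtr \<dots> = complex_of_real (mtr (A ^\<^sub>m k))"
      unfolding mtr_def using A by (simp add: of_real_sum)
    finally show ?thesis by simp
  qed
  moreover have "length rs = n" using as(2) by (simp add: rs_def)
  ultimately show ?thesis using cpA by blast
qed



lemma adj_carrier: "adj_mat n E \<in> carrier_mat n n" by (simp add: adj_mat_def)
lemma adj_entry: "i < n \<Longrightarrow> j < n \<Longrightarrow> adj_mat n E $$ (i,j) = (if {i,j} \<in> E then 1 else 0)"
  by (simp add: adj_mat_def)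
lemma adj_sym: "i < n \<Longrightarrow> j < n \<Longrightarrow> adj_mat n E $$ (i,j) = adj_mat n E $$ (j,i)"
  by (simp add: adj_entry insert_commute)

lemma sum_ind_card: "finite S \<Longrightarrow> (\<Sum>x\<in>S. if P x then 1 else 0 :: real) = real (card {x\<in>S. P x})"
  by (simp add: sum.If_cases Int_def)

lemma adj_pow_nonneg: "i < n \<Longrightarrow> j < n \<Longrightarrow> (adj_mat n E ^\<^sub>m p) $$ (i,j) \<ge> 0"
proof (induction p arbitrary: i j)
  case 0 then show ?case by (simp add: adj_mat_def)
next
  case (Suc p)
  have C: "adj_mat n E ^\<^sub>m p \<in> carrier_mat n n" using adj_carrier by simp
  have "(adj_mat n E ^\<^sub>m Suc p) $$ (i,j) = (\<Sum>l\<in>{0..<n}. (adj_mat n E ^\<^sub>m p) $$ (i,l) * adj_mat n E $$ (l,j))"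
    using mult_entry[OF C adj_carrier Suc.prems] by simp
  also have "\<dots> \<ge> 0" using Suc by (intro sum_nonneg mult_nonneg_nonneg) (auto simp: adj_entry)
  finally show ?case .
qed

lemma mtr_adj_pow_nonneg: "mtr (adj_mat n E ^\<^sub>m p) \<ge> 0"
proof -
  have "dim_row (adj_mat n E) = n" using adj_carrier[of n E] by simp
  then show ?thesis unfolding mtr_def using adj_pow_nonneg[of _ n] by (intro sum_nonneg) auto
qed

lemma adj_pow1: "adj_mat n E ^\<^sub>m 1 = adj_mat n E"
  using adj_carrier[of n E] by simp

lemma mtr_adj: assumes "simple_graph n E" shows "mtr (adj_mat n E ^\<^sub>m 1) = 0"
proof -
  have "{i} \<notin> E" for i using assms unfolding simple_graph_def by fastforce
  then show ?thesis unfolding adj_pow1 mtr_def using adj_carrier[of n E] by (simp add: adj_entry)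
qed

lemma finite_E: "simple_graph n E \<Longrightarrow> finite E"
  unfolding simple_graph_def by (rule finite_subset[of E "Pow {0..<n}"]) auto

lemma T1: fixes a b :: nat shows "{(i,j). {i,j} = {a,b}} = {(a,b),(b,a)}"
  by (auto simp: doubleton_eq_iff)

lemma T2: assumes G: "simple_graph n E" and e: "e \<in> E" shows "\<exists>a b. e = {a,b} \<and> a \<noteq> b"
  using G e unfolding simple_graph_def card_2_iff by blast

lemma card_S2: assumes G: "simple_graph n E"
  shows "card {p \<in> {0..<n}\<times>{0..<n}. (case p of (i,j) \<Rightarrow> {i,j} \<in> E)} = 2 * card E"
proof -
  define F where "F e = {(i,j). {i,j} = e}" for e :: "nat set"
  have sub: "e \<subseteq> {0..<n}" if "e \<in> E" for e using G that unfolding simple_graph_def by blast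
  have eq: "{p \<in> {0..<n}\<times>{0..<n}. (case p of (i,j) \<Rightarrow> {i,j} \<in> E)} = (\<Union>e\<in>E. F e)"
  proof (intro equalityI subsetI)
    fix p :: "nat \<times> nat"
    obtain i j where p: "p = (i,j)" by (cases p)
    assume "p \<in> {p \<in> {0..<n}\<times>{0..<n}. (case p of (i,j) \<Rightarrow> {i,j} \<in> E)}"
    then have "{i,j} \<in> E" by (simp add: p)
    moreover have "p \<in> F {i,j}" by (simp add: p F_def)
    ultimately show "p \<in> (\<Union>e\<in>E. F e)" by blast
  next
    fix p :: "nat \<times> nat"
    obtain i j where p: "p = (i,j)" by (cases p)
    assume "p \<in> (\<Union>e\<in>E. F e)"
    then obtain e where e: "e \<in> E" "{i,j} = e" by (auto simp: p F_def)
    then have "i < n" "j < n" using sub[OF e(1)] by auto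
    then show "p \<in> {p \<in> {0..<n}\<times>{0..<n}. (case p of (i,j) \<Rightarrow> {i,j} \<in> E)}" using e by (simp add: p)
  qed
  have cF: "card (F e) = 2" "finite (F e)" if e: "e \<in> E" for e
  proof -
    obtain a b where ab: "e = {a,b}" "a \<noteq> b" using T2[OF G e] by blast
    have "F e = {(a,b),(b,a)}" unfolding F_def ab by (rule T1)
    then show "card (F e) = 2" "finite (F e)" using ab by auto
  qed
  have "card (\<Union>e\<in>E. F e) = (\<Sum>e\<in>E. card (F e))"
  proof (rule card_UN_disjoint)
    show "finite E" using finite_E[OF G] .
    show "\<forall>e\<in>E. finite (F e)" using cF by blast
    show "\<forall>e\<in>E. \<forall>e'\<in>E. e \<noteq> e' \<longrightarrow> F e \<inter> F e' = {}" unfolding F_def by blast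
  qed
  also have "\<dots> = (\<Sum>e\<in>E. 2)" using cF by (intro sum.cong) auto
  also have "\<dots> = 2 * card E" by simp
  finally show ?thesis using eq by metis
qed


lemma mtr_adj2: assumes G: "simple_graph n E" shows "mtr (adj_mat n E ^\<^sub>m 2) = 2 * real (card E)"
proof -
  let ?A = "adj_mat n E"
  have A: "?A \<in> carrier_mat n n" by (rule adj_carrier)
  have p2: "?A ^\<^sub>m 2 = ?A * ?A" using adj_pow1[of n E] by (simp add: numeral_2_eq_2)
  have "mtr (?A * ?A) = (\<Sum>i\<in>{0..<n}. (?A * ?A) $$ (i,i))" unfolding mtr_def using A by simp
  also have "\<dots> = (\<Sum>i\<in>{0..<n}. \<Sum>j\<in>{0..<n}. if {i,j} \<in> E then 1 else 0)"
  proof (rule sum.cong[OF refl])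
    fix i assume i: "i \<in> {0..<n}"
    have "(?A * ?A) $$ (i,i) = (\<Sum>j\<in>{0..<n}. ?A $$ (i,j) * ?A $$ (j,i))" using i by (intro mult_entry[OF A A]) auto
    also have "\<dots> = (\<Sum>j\<in>{0..<n}. if {i,j} \<in> E then 1 else 0)" using i
      by (intro sum.cong[OF refl]) (auto simp: adj_entry insert_commute)
    finally show "(?A * ?A) $$ (i,i) = (\<Sum>j\<in>{0..<n}. if {i,j} \<in> E then 1 else 0)" .
  qed
  also have "\<dots> = (\<Sum>p\<in>{0..<n}\<times>{0..<n}. if (case p of (i,j) \<Rightarrow> {i,j} \<in> E) then 1 else 0)"
    by (simp add: sum.cartesian_product case_prod_beta)
  also have "\<dots> = real (card {p \<in> {0..<n}\<times>{0..<n}. (case p of (i,j) \<Rightarrow> {i,j} \<in> E)})"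
    by (rule sum_ind_card) auto
  also have "\<dots> = 2 * real (card E)" using card_S2[OF G] by simp
  finally show ?thesis using p2 by simp
qed



lemma T3: fixes a b c :: nat assumes d: "a \<noteq> b" "b \<noteq> c" "a \<noteq> c"
  shows "{(i,j,l). {i,j,l} = {a,b,c} \<and> i \<noteq> j \<and> j \<noteq> l \<and> i \<noteq> l} =
    {(a,b,c),(a,c,b),(b,a,c),(b,c,a),(c,a,b),(c,b,a)}" (is "?L = ?R")
proof (intro equalityI subsetI)
  fix p assume "p \<in> ?L"
  then obtain i j l where p: "p = (i,j,l)" and e: "{i,j,l} = {a,b,c}" and dd: "i \<noteq> j" "j \<noteq> l" "i \<noteq> l"
    by auto
  have m: "i \<in> {a,b,c}" "j \<in> {a,b,c}" "l \<in> {a,b,c}" using e by blast+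
  have m2: "a \<in> {i,j,l}" "b \<in> {i,j,l}" "c \<in> {i,j,l}" using e by blast+
  show "p \<in> ?R" using m m2 dd d unfolding p by auto
next
  fix p assume "p \<in> ?R"
  then show "p \<in> ?L" using d by (auto simp: insert_commute)
qed

lemma card_T3: fixes a b c :: nat assumes d: "a \<noteq> b" "b \<noteq> c" "a \<noteq> c"
  shows "card {(i,j,l). {i,j,l} = {a,b,c} \<and> i \<noteq> j \<and> j \<noteq> l \<and> i \<noteq> l} = 6"
  unfolding T3[OF d] using d by simp

lemma no_loop: "simple_graph n E \<Longrightarrow> {x} \<notin> E"
  unfolding simple_graph_def by fastforce

definition Tri :: "nat \<Rightarrow> nat set set \<Rightarrow> nat set set" where
  "Tri n E = {T. T \<subseteq> {0..<n} \<and> card T = 3 \<and> (\<forall>x\<in>T. \<forall>y\<in>T. x \<noteq> y \<longrightarrow> {x,y} \<in> E)}"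

lemma card_S3: assumes G: "simple_graph n E"
  shows "card {p \<in> {0..<n}\<times>{0..<n}\<times>{0..<n}. (case p of (i,j,l) \<Rightarrow> {i,j} \<in> E \<and> {j,l} \<in> E \<and> {l,i} \<in> E)}
     = 6 * triangles n E"
proof -
  define F where "F T = {(i,j,l). {i,j,l} = T \<and> i \<noteq> j \<and> j \<noteq> l \<and> i \<noteq> l}" for T :: "nat set"
  have eq: "{p \<in> {0..<n}\<times>{0..<n}\<times>{0..<n}. (case p of (i,j,l) \<Rightarrow> {i,j} \<in> E \<and> {j,l} \<in> E \<and> {l,i} \<in> E)}
      = (\<Union>T\<in>Tri n E. F T)"
  proof (intro equalityI subsetI)
    fix p :: "nat \<times> nat \<times> nat"
    obtain i j l where p: "p = (i,j,l)" by (cases p)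
    assume "p \<in> {p \<in> {0..<n}\<times>{0..<n}\<times>{0..<n}. (case p of (i,j,l) \<Rightarrow> {i,j} \<in> E \<and> {j,l} \<in> E \<and> {l,i} \<in> E)}"
    then have r: "i < n" "j < n" "l < n" and ed: "{i,j} \<in> E" "{j,l} \<in> E" "{l,i} \<in> E" by (auto simp: p)
    have dd: "i \<noteq> j" "j \<noteq> l" "i \<noteq> l" using ed no_loop[OF G] by auto
    have "{i,j,l} \<in> Tri n E" unfolding Tri_def
    proof (intro CollectI conjI)
      show "{i,j,l} \<subseteq> {0..<n}" using r by auto
      show "card {i,j,l} = 3" using dd by simp
      show "\<forall>x\<in>{i,j,l}. \<forall>y\<in>{i,j,l}. x \<noteq> y \<longrightarrow> {x,y} \<in> E"
        using ed by (auto simp: insert_commute)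
    qed
    moreover have "p \<in> F {i,j,l}" using dd by (simp add: p F_def)
    ultimately show "p \<in> (\<Union>T\<in>Tri n E. F T)" by blast
  next
    fix p :: "nat \<times> nat \<times> nat"
    obtain i j l where p: "p = (i,j,l)" by (cases p)
    assume "p \<in> (\<Union>T\<in>Tri n E. F T)"
    then obtain T where T: "T \<in> Tri n E" "{i,j,l} = T" and dd: "i \<noteq> j" "j \<noteq> l" "i \<noteq> l"
      by (auto simp: p F_def)
    have sub: "T \<subseteq> {0..<n}" and pr: "\<forall>x\<in>T. \<forall>y\<in>T. x \<noteq> y \<longrightarrow> {x,y} \<in> E"
      using T(1) unfolding Tri_def by auto
    have "i < n" "j < n" "l < n" using sub T(2) by auto
    moreover have "{i,j} \<in> E" "{j,l} \<in> E" "{l,i} \<in> E" using pr T(2) dd by auto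
    ultimately show "p \<in> {p \<in> {0..<n}\<times>{0..<n}\<times>{0..<n}. (case p of (i,j,l) \<Rightarrow> {i,j} \<in> E \<and> {j,l} \<in> E \<and> {l,i} \<in> E)}"
      by (simp add: p)
  qed
  have cF: "card (F T) = 6" "finite (F T)" if T: "T \<in> Tri n E" for T
  proof -
    have "card T = 3" using T unfolding Tri_def by auto
    then obtain a b c where abc: "T = {a,b,c}" "a \<noteq> b" "b \<noteq> c" "a \<noteq> c" unfolding card_3_iff by blast
    show "card (F T) = 6" unfolding F_def abc(1) using card_T3[OF abc(2-4)] .
    then show "finite (F T)" by (intro card_ge_0_finite) simp
  qed
  have fin: "finite (Tri n E)" unfolding Tri_def by (rule finite_subset[of _ "Pow {0..<n}"]) auto
  have "card (\<Union>T\<in>Tri n E. F T) = (\<Sum>T\<in>Tri n E. card (F T))"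
  proof (rule card_UN_disjoint)
    show "finite (Tri n E)" using fin .
    show "\<forall>T\<in>Tri n E. finite (F T)" using cF by blast
    show "\<forall>T\<in>Tri n E. \<forall>T'\<in>Tri n E. T \<noteq> T' \<longrightarrow> F T \<inter> F T' = {}" unfolding F_def by blast
  qed
  also have "\<dots> = (\<Sum>T\<in>Tri n E. 6)" using cF by (intro sum.cong) auto
  also have "\<dots> = 6 * card (Tri n E)" by simp
  also have "card (Tri n E) = triangles n E" unfolding Tri_def triangles_def ..
  finally show ?thesis using eq by metis
qed

lemma mtr_adj3: assumes G: "simple_graph n E" shows "mtr (adj_mat n E ^\<^sub>m 3) = 6 * real (triangles n E)"
proof -
  let ?A = "adj_mat n E"
  have A: "?A \<in> carrier_mat n n" by (rule adj_carrier)
  have AA: "?A * ?A \<in> carrier_mat n n" using A by simp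
  have p3: "?A ^\<^sub>m 3 = ?A * ?A * ?A" using adj_pow1[of n E] by (simp add: numeral_3_eq_3)
  let ?P = "\<lambda>i j l. {i,j} \<in> E \<and> {j,l} \<in> E \<and> {l,i} \<in> E"
  have "mtr (?A * ?A * ?A) = (\<Sum>i\<in>{0..<n}. (?A * ?A * ?A) $$ (i,i))" unfolding mtr_def using A by simp
  also have "\<dots> = (\<Sum>i\<in>{0..<n}. \<Sum>j\<in>{0..<n}. \<Sum>l\<in>{0..<n}. if ?P i j l then 1 else 0)"
  proof (rule sum.cong[OF refl])
    fix i assume i: "i \<in> {0..<n}"
    have "(?A * ?A * ?A) $$ (i,i) = (\<Sum>l\<in>{0..<n}. (?A * ?A) $$ (i,l) * ?A $$ (l,i))"
      using i by (intro mult_entry[OF AA A]) auto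
    also have "\<dots> = (\<Sum>l\<in>{0..<n}. (\<Sum>j\<in>{0..<n}. ?A $$ (i,j) * ?A $$ (j,l)) * ?A $$ (l,i))"
      using i by (intro sum.cong[OF refl], subst mult_entry[OF A A]) auto
    also have "\<dots> = (\<Sum>l\<in>{0..<n}. \<Sum>j\<in>{0..<n}. ?A $$ (i,j) * ?A $$ (j,l) * ?A $$ (l,i))"
      by (simp add: sum_distrib_right)
    also have "\<dots> = (\<Sum>j\<in>{0..<n}. \<Sum>l\<in>{0..<n}. ?A $$ (i,j) * ?A $$ (j,l) * ?A $$ (l,i))"
      by (rule sum.swap)
    also have "\<dots> = (\<Sum>j\<in>{0..<n}. \<Sum>l\<in>{0..<n}. if ?P i j l then 1 else 0)"
      using i by (intro sum.cong[OF refl]) (auto simp: adj_entry)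
    finally show "(?A * ?A * ?A) $$ (i,i) = (\<Sum>j\<in>{0..<n}. \<Sum>l\<in>{0..<n}. if ?P i j l then 1 else 0)" .
  qed
  also have "\<dots> = (\<Sum>i\<in>{0..<n}. \<Sum>q\<in>{0..<n}\<times>{0..<n}. if ?P i (fst q) (snd q) then 1 else 0)"
    by (intro sum.cong[OF refl]) (simp add: sum.cartesian_product case_prod_beta)
  also have "\<dots> = (\<Sum>p\<in>{0..<n}\<times>{0..<n}\<times>{0..<n}. if (case p of (i,j,l) \<Rightarrow> ?P i j l) then 1 else 0)"
    by (simp add: sum.cartesian_product case_prod_beta)
  also have "\<dots> = real (card {p \<in> {0..<n}\<times>{0..<n}\<times>{0..<n}. (case p of (i,j,l) \<Rightarrow> ?P i j l)})"
    by (rule sum_ind_card) auto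
  also have "\<dots> = 6 * real (triangles n E)" using card_S3[OF G] by simp
  finally show ?thesis using p3 by simp
qed


lemma proots_lin_prod: "proots (\<Prod>r\<leftarrow>rs. [:-r, 1:]) = mset (rs :: real list)"
proof (induction rs)
  case Nil then show ?case by simp
next
  case (Cons r rs)
  have nz: "(\<Prod>r\<leftarrow>rs. [:-r, 1:]) \<noteq> (0 :: real poly)"
    by (auto simp: prod_list_zero_iff)
  have e: "(\<Prod>r\<leftarrow>r#rs. [:-r, 1:]) = [:-r, 1:] * (\<Prod>r\<leftarrow>rs. [:-r, 1:])" by simp
  have h: "proots ([:-r, 1:] * (\<Prod>r\<leftarrow>rs. [:-r, 1:])) = proots [:-r, 1:] + proots (\<Prod>r\<leftarrow>rs. [:-r, 1:])"
    by (rule proots_mult) (use nz in auto)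
  show ?case unfolding e h Cons.IH by simp
qed

lemma sum_rev_sort: "sum_list (map f (rev (sort xs))) = sum_list (map f xs)" for f :: "real \<Rightarrow> real"
proof -
  have "mset (map f (rev (sort xs))) = mset (map f xs)" by simp
  then show ?thesis by (metis sum_mset_sum_list)
qed

lemma n_ge_3: assumes G: "simple_graph n E" and c: "card E \<ge> 2" shows "n \<ge> 3"
proof (rule ccontr)
  assume "\<not> n \<ge> 3"
  then have n2: "n \<le> 2" by simp
  have "E \<subseteq> {{0..<n}}"
  proof
    fix e assume e: "e \<in> E"
    then have s: "e \<subseteq> {0..<n}" "card e = 2" using G unfolding simple_graph_def by auto
    have "card e \<le> card {0..<n}" using s by (intro card_mono) auto
    then have "card e = card {0..<n}" using s n2 by simp
    then have "e = {0..<n}" using s by (intro card_subset_eq) auto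
    then show "e \<in> {{0..<n}}" by simp
  qed
  then have "card E \<le> card {{0..<n}}" by (intro card_mono) auto
  then show False using c by simp
qed

theorem theorem3p1:
  fixes n :: nat and E :: "nat set set"
  assumes "simple_graph n E" and "card E \<ge> 2"
  shows "(lambda1 n E)^2 + (lambda2 n E)^2 \<le> real (card E) + (3 * real (triangles n E)) powr (2/3)
       \<and> (triangles n E > 0 \<longrightarrow>
         (lambda1 n E)^2 + (lambda2 n E)^2 < real (card E) + (3 * real (triangles n E)) powr (2/3))"
proof -
  note G = assms(1)
  have n3: "n \<ge> 3" using n_ge_3[OF assms] .
  obtain rs where cp: "char_poly (adj_mat n E) = (\<Prod>r\<leftarrow>rs. [:-r, 1:])" and len: "length rs = n"
    and tr: "\<forall>k. sum_list (map (\<lambda>r. r^k) rs) = mtr (adj_mat n E ^\<^sub>m k)"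
    using spectral_sums[OF adj_carrier adj_sym] by blast
  define L where "L = adj_eigs n E"
  have L: "L = rev (sort rs)" unfolding L_def adj_eigs_def cp proots_lin_prod by simp
  have sums: "sum_list (map (\<lambda>l. l^k) L) = mtr (adj_mat n E ^\<^sub>m k)" for k
    using tr sum_rev_sort[of "\<lambda>l. l^k" rs] unfolding L by simp
  have srt: "sorted_wrt (\<ge>) L" unfolding L by (simp add: sorted_wrt_rev)
  have lenL: "length L \<ge> 3" using n3 len by (simp add: L)
  have s1: "sum_list L = 0" using sums[of 1] mtr_adj[OF G] by simp
  have s2: "sum_list (map (\<lambda>l. l^2) L) = 2 * real (card E)" using sums[of 2] mtr_adj2[OF G] by simp
  have s3: "sum_list (map (\<lambda>l. l^3) L) = 6 * real (triangles n E)" using sums[of 3] mtr_adj3[OF G] by simp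
  have odd: "\<forall>p. odd p \<longrightarrow> sum_list (map (\<lambda>l. l^p) L) \<ge> 0" using sums mtr_adj_pow_nonneg by simp
  have mpos: "real (card E) > 0" using assms(2) by simp
  from main_real[OF srt lenL s1 s2 mpos s3 _ odd]
  show ?thesis unfolding lambda1_def lambda2_def L_def[symmetric] by simp
qed

end
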